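(* Let $k\ge 3$ and let $c_1\ge c_2\ge\dots\ge c_k>0$ be constants with $\sum_{i=1}^k c_i=1$. For every $n$ such that all $c_i n$ are integers, let $G_n$ be the complete $k$-partite graph with parts $V_1,\dots,V_k$, $|V_i|=c_i n$. Then: (i) if $c_2\le \tfrac12(1-c_1)$, $\mathrm{RC}(G_n)=n+c_1n-1$; (ii) if $c_2> \tfrac12(1-c_1)$, $\mathrm{RC}(G_n)=2(n-c_2n)$.
   Context: Robot crawler model: let $G=(V,E)$ be a finite connected simple graph with $|V|=n$. An initial weighting is a bijection $w_0:V\to\{-n,-n+1,\dots,-1\}$. At time $1$ the crawler visits $w_0^{-1}(-n)$. If the crawler visits vertex $v$ at time $t$, then $w_t(v)=t$ and $w_t(u)=w_{t-1}(u)$ for all $u\neq v$. If $\min_{y\in V}w_t(y)>0$, the process stops and $\mathcal{RC}(G,w_0):=t$. Otherwise, at time $t+1$ the crawler moves to the neighbour $u$ of $v$ minimising $w_t(u)$ (the weights are distinct, so this is well defined). A vertex is "cleaned" at the first time it is visited. With $\Omega_n$ the set of all $n!$ initial weightings, $\mathrm{rc}(G)=\min_{w_0\in\Omega_n}\mathcal{RC}(G,w_0)$, $\mathrm{RC}(G)=\max_{w_0\in\Omega_n}\mathcal{RC}(G,w_0)$, and $\overline{\mathrm{rc}}(G)=\mathbb{E}\,\mathcal{RC}(G,\overline{w_0})$ where $\overline{w_0}$ is uniformly distributed on $\Omega_n$. A complete $k$-partite graph with parts $V_1,\dots,V_k$ has an edge between $u$ and $v$ if and only if $u,v$ lie in different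 parts. *)

theory Defs
  imports Complex_Main
begin

text \<open>Time-indexed robot crawler process:
crawl V E w0 t = (w_t, vertex visited at time t); time 0 is the initial state.\<close>

fun crawl :: "'a set \<Rightarrow> ('a \<Rightarrow> 'a \<Rightarrow> bool) \<Rightarrow> ('a \<Rightarrow> int) \<Rightarrow> nat \<Rightarrow> ('a \<Rightarrow> int) \<times> 'a" where
  "crawl V E w0 0 = (w0, undefined)"
| "crawl V E w0 (Suc t) =
     (let (w, v) = crawl V E w0 t;
          u = (if t = 0 then (THE x. x \<in> V \<and> w0 x = - int (card V))
               else (ARG_MIN w x. x \<in> V \<and> E v x))
      in (w(u := int (Suc t)), u))"

definition RC_time :: "'a set \<Rightarrow> ('a \<Rightarrow> 'a \<Rightarrow> bool) \<Rightarrow> ('a \<Rightarrow> int) \<Rightarrow> nat" where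
  "RC_time V E w0 = (LEAST t. \<forall>y\<in>V. fst (crawl V E w0 t) y > 0)"

definition init_weightings :: "'a set \<Rightarrow> ('a \<Rightarrow> int) set" where
  "init_weightings V = {w. bij_betw w V {- int (card V) .. -1} \<and> (\<forall>x. x \<notin> V \<longrightarrow> w x = 0)}"

definition RC_max :: "'a set \<Rightarrow> ('a \<Rightarrow> 'a \<Rightarrow> bool) \<Rightarrow> nat" where
  "RC_max V E = Max (RC_time V E ` init_weightings V)"

definition kpart_V :: "nat \<Rightarrow> (nat \<Rightarrow> nat) \<Rightarrow> (nat \<times> nat) set" where
  "kpart_V k s = {(i, j). 1 \<le> i \<and> i \<le> k \<and> j < s i}"

definition kpart_E :: "nat \<Rightarrow> (nat \<Rightarrow> nat) \<Rightarrow> nat \<times> nat \<Rightarrow> nat \<times> nat \<Rightarrow> bool" where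
  "kpart_E k s x y = (x \<in> kpart_V k s \<and> y \<in> kpart_V k s \<and> fst x \<noteq> fst y)"

end

theory Submission
  imports Defs
begin

lemma is_arg_min_ex:
  fixes f :: "'a \<Rightarrow> 'b::linorder"
  assumes "finite {x. P x}" "P y"
  shows "is_arg_min f P (arg_min f P)"
proof -
  from ex_is_arg_min_if_finite[OF assms(1), of f] assms(2)
  obtain x where "is_arg_min f (\<lambda>x. x \<in> {x. P x}) x" by blast
  hence "\<exists>x. is_arg_min f P x" by auto
  thus ?thesis unfolding arg_min_def by (rule someI_ex)
qed

lemma image_filter: "f ` {t \<in> A. P (f t)} = {x \<in> f ` A. P x}" by auto

locale cs =
  fixes V :: "'a set" and E :: "'a \<Rightarrow> 'a \<Rightarrow> bool" and p :: "'a \<Rightarrow> nat" and w0 :: "'a \<Rightarrow> int"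
  assumes finV: "finite V" and E_iff: "\<And>x y. E x y \<longleftrightarrow> x\<in>V \<and> y\<in>V \<and> p x \<noteq> p y"
   and two: "\<And>v. v\<in>V \<Longrightarrow> \<exists>x\<in>V. p x \<noteq> p v"
   and w0: "w0 \<in> init_weightings V"
   and nonempty: "V \<noteq> {}"
begin

definition "W t = fst (crawl V E w0 t)"
definition "pos t = snd (crawl V E w0 t)"
definition "dirty t = {x\<in>V. W t x < 0}"
definition "trapped t \<longleftrightarrow> (\<forall>x\<in>dirty t. p x = p (pos t))"
abbreviation "nn \<equiv> card V"

lemma nn_pos: "nn \<ge> 1" using finV nonempty by (simp add: Suc_le_eq card_gt_0_iff)

lemma w0_bij: "bij_betw w0 V {- int nn .. -1}" and w0_out: "x \<notin> V \<Longrightarrow> w0 x = 0"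
  using w0 by (auto simp: init_weightings_def)

lemma crawl_Suc: "crawl V E w0 (Suc t) =
   (let u = (if t = 0 then (THE x. x \<in> V \<and> w0 x = - int nn) else (ARG_MIN (W t) x. x \<in> V \<and> E (pos t) x))
    in ((W t)(u := int (Suc t)), u))"
  by (simp add: W_def pos_def case_prod_beta Let_def)

lemma W_Suc: "W (Suc t) = (W t)(pos (Suc t) := int (Suc t))"
  unfolding W_def pos_def by (simp add: crawl_Suc[unfolded W_def pos_def] Let_def del: crawl.simps)

lemma pos_1: "pos (Suc 0) = (THE x. x \<in> V \<and> w0 x = - int nn)"
  unfolding pos_def by (simp add: crawl_Suc[unfolded W_def pos_def] Let_def del: crawl.simps)

lemma pos_Suc: "t \<ge> 1 \<Longrightarrow> pos (Suc t) = (ARG_MIN (W t) x. x \<in> V \<and> E (pos t) x)"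
  unfolding pos_def W_def by (simp add: crawl_Suc[unfolded W_def pos_def] Let_def del: crawl.simps)

lemma W0: "W 0 = w0" by (simp add: W_def)

lemma w0_range: "x \<in> V \<Longrightarrow> w0 x < 0 \<and> w0 x \<ge> - int nn"
proof -
  assume "x \<in> V"
  hence "w0 x \<in> w0 ` V" by blast
  thus ?thesis using w0_bij by (simp add: bij_betw_def)
qed

lemma pos1_V: "pos (Suc 0) \<in> V \<and> w0 (pos (Suc 0)) = - int nn"
proof -
  have "- int nn \<in> {- int nn .. -1}" using nn_pos by auto
  then obtain x where x: "x \<in> V" "w0 x = - int nn" using w0_bij by (metis bij_betw_iff_bijections)
  have "\<exists>!x. x \<in> V \<and> w0 x = - int nn"
    using x w0_bij by (metis bij_betw_iff_bijections)
  then show ?thesis unfolding pos_1 by (rule theI')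
qed

lemma pos_Suc_prop:
  assumes "t \<ge> 1" "pos t \<in> V"
  shows "is_arg_min (W t) (\<lambda>x. x \<in> V \<and> E (pos t) x) (pos (Suc t))"
proof -
  obtain y where y: "y \<in> V" "p y \<noteq> p (pos t)" using two assms(2) by blast
  have "finite {x. x \<in> V \<and> E (pos t) x}" using finV by simp
  moreover have "y \<in> V \<and> E (pos t) y" using y assms by (auto simp: E_iff)
  ultimately show ?thesis unfolding pos_Suc[OF assms(1)] by (rule is_arg_min_ex)
qed

lemma posV: "t \<ge> 1 \<Longrightarrow> pos t \<in> V"
proof (induction t)
  case 0 then show ?case by simp
next
  case (Suc t)
  show ?case
  proof (cases "t = 0")
    case True then show ?thesis using pos1_V by simp
  next
    case False
    hence "t \<ge> 1" by simp
    with Suc have "pos t \<in> V" by simp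
    from pos_Suc_prop[OF \<open>t \<ge> 1\<close> this] show ?thesis by (simp add: is_arg_min_def)
  qed
qed

lemma step:
  assumes "t \<ge> 1"
  shows "pos (Suc t) \<in> V" "p (pos (Suc t)) \<noteq> p (pos t)"
    "\<And>x. x \<in> V \<Longrightarrow> p x \<noteq> p (pos t) \<Longrightarrow> W t (pos (Suc t)) \<le> W t x"
  using pos_Suc_prop[OF assms posV[OF assms]] posV[OF assms]
  by (auto simp: is_arg_min_linorder E_iff)

lemma W_inv: "(\<forall>x. W t x < 0 \<longrightarrow> W t x = w0 x) \<and> (\<forall>x\<in>V. W t x \<noteq> 0)"
proof (induction t)
  case 0
  have "\<forall>x\<in>V. w0 x \<noteq> 0" using w0_range by force
  then show ?case by (simp add: W0)
next
  case (Suc t) then show ?case by (simp add: W_Suc)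
qed

lemma dirty0: "dirty 0 = V"
  using w0_range by (auto simp: dirty_def W0)

lemma dirty_Suc: "dirty (Suc t) = dirty t - {pos (Suc t)}"
  by (auto simp: dirty_def W_Suc)

lemma dirty_sub: "dirty t \<subseteq> V" by (auto simp: dirty_def)

lemma fresh: "t \<ge> 1 \<Longrightarrow> x \<in> dirty t \<Longrightarrow> p x \<noteq> p (pos t) \<Longrightarrow> pos (Suc t) \<in> dirty t"
  using step[of t] by (force simp: dirty_def)

lemma stale: "t \<ge> 1 \<Longrightarrow> trapped t \<Longrightarrow> pos (Suc t) \<notin> dirty t"
  using step[of t] by (auto simp: trapped_def)

lemma phase1:
  assumes "t \<ge> 1" "\<forall>s. 1 \<le> s \<and> s < t \<longrightarrow> \<not> trapped s"
  shows "inj_on pos {1..t} \<and> pos ` {1..t} = V - dirty t"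
  using assms
proof (induction t rule: nat_induct_at_least)
  case base
  have "dirty (Suc 0) = V - {pos (Suc 0)}" by (simp add: dirty_Suc dirty0)
  then show ?case using pos1_V by auto
next
  case (Suc t)
  hence IH: "inj_on pos {1..t} \<and> pos ` {1..t} = V - dirty t" by auto
  have "\<not> trapped t" using Suc by auto
  then obtain x where "x \<in> dirty t" "p x \<noteq> p (pos t)" by (auto simp: trapped_def)
  hence f: "pos (Suc t) \<in> dirty t" using fresh Suc by blast
  have eq: "{1..Suc t} = insert (Suc t) {1..t}" by auto
  have "V - dirty (Suc t) = insert (pos (Suc t)) (V - dirty t)"
    using f dirty_sub by (auto simp: dirty_Suc)
  moreover have "pos (Suc t) \<notin> pos ` {1..t}" using IH f by auto
  ultimately show ?case using IH unfolding eq by auto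
qed

lemma phase1_card:
  assumes "t \<ge> 1" "\<forall>s. 1 \<le> s \<and> s < t \<longrightarrow> \<not> trapped s"
  shows "card (dirty t) = nn - t"
proof -
  from phase1[OF assms] have i: "inj_on pos {1..t}" and e: "pos ` {1..t} = V - dirty t" by auto
  have "card (V - dirty t) = card {1..t}" using card_image[OF i] e by simp
  hence "card (V - dirty t) = t" by simp
  moreover have "card (V - dirty t) = nn - card (dirty t)"
    by (rule card_Diff_subset[OF finite_subset[OF dirty_sub finV] dirty_sub])
  moreover have "card (dirty t) \<le> nn" using dirty_sub finV by (simp add: card_mono)
  ultimately show ?thesis by linarith
qed

definition "Tr = (LEAST t. 1 \<le> t \<and> trapped t)"
definition "dd = card (dirty Tr)"

lemma Tr_props: "1 \<le> Tr \<and> Tr \<le> nn \<and> trapped Tr \<and> (\<forall>s. 1 \<le> s \<and> s < Tr \<longrightarrow> \<not> trapped s)"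
proof -
  have ex: "\<exists>t. 1 \<le> t \<and> t \<le> nn \<and> trapped t"
  proof (rule ccontr)
    assume "\<not> ?thesis"
    hence "\<forall>s. 1 \<le> s \<and> s < nn \<longrightarrow> \<not> trapped s" and nt: "\<not> trapped nn" using nn_pos by auto
    from phase1_card[OF nn_pos this(1)] have "dirty nn = {}"
      using finV dirty_sub finite_subset[OF dirty_sub finV] by simp
    with nt show False by (simp add: trapped_def)
  qed
  then obtain t where t: "1 \<le> t" "t \<le> nn" "trapped t" by blast
  have 1: "1 \<le> Tr \<and> trapped Tr" unfolding Tr_def by (rule LeastI[of _ t]) (use t in auto)
  have 2: "Tr \<le> t" unfolding Tr_def by (rule Least_le) (use t in auto)
  have 3: "\<forall>s. 1 \<le> s \<and> s < Tr \<longrightarrow> \<not> trapped s" unfolding Tr_def using not_less_Least by blast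
  show ?thesis using 1 2 3 t by auto
qed

lemma dd_eq: "dd = nn - Tr"
  unfolding dd_def using Tr_props phase1_card by blast


lemma phase2_step:
  assumes "t \<ge> 1" "trapped t" "dirty t \<noteq> {}"
  shows "dirty (Suc t) = dirty t" "pos (Suc (Suc t)) \<in> dirty t"
    "dirty (Suc (Suc t)) = dirty t - {pos (Suc (Suc t))}" "trapped (Suc (Suc t))"
proof -
  show d1: "dirty (Suc t) = dirty t" using stale[OF assms(1,2)] by (auto simp: dirty_Suc)
  obtain x where x: "x \<in> dirty t" using assms(3) by blast
  have "p x = p (pos t)" using x assms(2) by (auto simp: trapped_def)
  hence "p x \<noteq> p (pos (Suc t))" using step(2)[OF assms(1)] by simp
  hence "pos (Suc (Suc t)) \<in> dirty (Suc t)" using fresh[of "Suc t" x] x d1 by simp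
  thus p2: "pos (Suc (Suc t)) \<in> dirty t" using d1 by simp
  show d2: "dirty (Suc (Suc t)) = dirty t - {pos (Suc (Suc t))}" using d1 by (simp add: dirty_Suc)
  have "p (pos (Suc (Suc t))) = p (pos t)" using p2 assms(2) by (auto simp: trapped_def)
  thus "trapped (Suc (Suc t))" using assms(2) d2 by (auto simp: trapped_def)
qed

lemma phase2:
  assumes "t \<ge> 1" "trapped t" "j \<le> card (dirty t)"
  shows "trapped (t + 2*j) \<and> card (dirty (t + 2*j)) = card (dirty t) - j"
  using assms(3)
proof (induction j)
  case 0 then show ?case using assms by simp
next
  case (Suc j)
  hence IH: "trapped (t + 2*j)" "card (dirty (t + 2*j)) = card (dirty t) - j" by auto
  have ne: "dirty (t + 2*j) \<noteq> {}" using IH(2) Suc.prems by auto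
  have eq: "t + 2 * Suc j = Suc (Suc (t + 2*j))" by simp
  note ps = phase2_step[OF _ IH(1) ne]
  have "card (dirty (Suc (Suc (t + 2*j)))) = card (dirty (t+2*j)) - 1"
    using ps(2,3) assms(1) finV dirty_sub by (simp add: card_Diff_singleton finite_subset)
  thus ?case unfolding eq using ps(4) assms(1) IH(2) by simp
qed


lemma allpos_iff: "(\<forall>y\<in>V. fst (crawl V E w0 t) y > 0) \<longleftrightarrow> dirty t = {}"
  using W_inv[of t] unfolding dirty_def W_def[symmetric]
  by (auto simp: not_less) (metis le_less)

lemma RC_eq: "RC_time V E w0 = nn + dd"
proof -
  have T: "1 \<le> Tr" "Tr \<le> nn" "trapped Tr" "\<forall>s. 1 \<le> s \<and> s < Tr \<longrightarrow> \<not> trapped s"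
    using Tr_props by auto
  have e: "dirty (Tr + 2*dd) = {}"
    using phase2[OF T(1,3), of dd] finV dirty_sub unfolding dd_def
    by (metis card_0_eq diff_self_eq_0 finite_subset order_refl)
  have ne: "dirty t \<noteq> {}" if "t < Tr + 2*dd" for t
  proof (cases "t < Tr")
    case True
    show ?thesis
    proof (cases "t = 0")
      case True then show ?thesis using dirty0 nonempty by simp
    next
      case False
      hence "card (dirty t) = nn - t" using phase1_card[of t] T(4) True by auto
      thus ?thesis using True T(2) by auto
    qed
  next
    case False
    define j where "j = (t - Tr) div 2"
    have j: "j < dd" using that False unfolding j_def by auto
    have c: "card (dirty (Tr + 2*j)) = dd - j" and tr: "trapped (Tr + 2*j)"
      using phase2[OF T(1,3), of j] j unfolding dd_def by auto
    hence ne: "dirty (Tr + 2*j) \<noteq> {}" using j by auto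
    show ?thesis
    proof (cases "even (t - Tr)")
      case True
      hence "t = Tr + 2*j" using False unfolding j_def by auto
      thus ?thesis using ne by simp
    next
      case odd: False
      hence "t - Tr = 2 * ((t - Tr) div 2) + 1" by (rule odd_two_times_div_two_succ[symmetric])
      hence "t = Suc (Tr + 2*j)" using False unfolding j_def by linarith
      thus ?thesis using phase2_step(1)[OF _ tr ne] T(1) ne by simp
    qed
  qed
  have "RC_time V E w0 = Tr + 2*dd"
    unfolding RC_time_def allpos_iff
  proof (rule Least_equality)
    show "dirty (Tr + 2*dd) = {}" by (rule e)
    show "\<And>y. dirty y = {} \<Longrightarrow> Tr + 2*dd \<le> y" using ne by (meson not_le)
  qed
  thus ?thesis using dd_eq T(2) by simp
qed


lemma pos_not_dirty: "t \<ge> 1 \<Longrightarrow> pos t \<notin> dirty t"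
  by (cases t) (simp_all add: dirty_Suc)

lemma UB1: "dd + 1 \<le> card {x\<in>V. p x = p (pos Tr)}"
proof -
  have T: "1 \<le> Tr" "trapped Tr" using Tr_props by auto
  have "dirty Tr \<subseteq> {x\<in>V. p x = p (pos Tr)} - {pos Tr}"
    using T pos_not_dirty dirty_sub by (auto simp: trapped_def)
  hence "dd \<le> card ({x\<in>V. p x = p (pos Tr)} - {pos Tr})"
    unfolding dd_def using finV by (intro card_mono) auto
  moreover have "pos Tr \<in> {x\<in>V. p x = p (pos Tr)}" using posV T by auto
  moreover have "card {x\<in>V. p x = p (pos Tr)} > 0" using finV calculation(2) by (auto simp: card_gt_0_iff)
  ultimately show ?thesis using finV
    by (simp add: card_Diff_singleton)
qed

lemma UB2:
  assumes "q \<noteq> p (pos Tr)"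
  shows "2 * card {x\<in>V. p x = q} \<le> Tr"
proof -
  have T: "1 \<le> Tr" "trapped Tr" "\<forall>s. 1 \<le> s \<and> s < Tr \<longrightarrow> \<not> trapped s"
    using Tr_props by auto
  note ph = phase1[OF T(1) T(3)]
  define S where "S = {t\<in>{1..Tr}. p (pos t) = q}"
  have "pos ` S = {x \<in> pos ` {1..Tr}. p x = q}" unfolding S_def by (rule image_filter)
  also have "\<dots> = {x\<in>V. p x = q}"
  proof -
    have "\<forall>x\<in>dirty Tr. p x \<noteq> q" using T(2) assms unfolding trapped_def by simp
    hence "{x \<in> V - dirty Tr. p x = q} = {x\<in>V. p x = q}" by blast
    moreover have "pos ` {1..Tr} = V - dirty Tr" using ph by (rule conjunct2)
    ultimately show ?thesis by simp
  qed
  finally have img: "pos ` S = {x\<in>V. p x = q}" .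
  have "inj_on pos {1..Tr}" using ph by (rule conjunct1)
  moreover have "S \<subseteq> {1..Tr}" unfolding S_def by auto
  ultimately have "inj_on pos S" by (rule inj_on_subset)
  hence cS: "card S = card {x\<in>V. p x = q}" using img card_image by fastforce
  have Ssub: "S \<subseteq> {1..<Tr}"
  proof
    fix t assume "t \<in> S"
    hence "t \<in> {1..Tr}" "t \<noteq> Tr" using assms unfolding S_def by auto
    thus "t \<in> {1..<Tr}" by simp
  qed
  have "(\<lambda>s. s - 1) ` (S - {1}) \<subseteq> {1..<Tr} - S"
  proof
    fix y assume "y \<in> (\<lambda>s. s - 1) ` (S - {1})"
    then obtain s where s: "s \<in> S" "s \<noteq> 1" "y = s - 1" by auto
    have s2: "s \<ge> 2" "s < Tr" using s Ssub by auto
    have "p (pos (Suc (s-1))) \<noteq> p (pos (s-1))" using step(2)[of "s-1"] s2 by simp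
    moreover have "Suc (s-1) = s" using s2 by simp
    ultimately have "p (pos (s-1)) \<noteq> q" using s unfolding S_def by simp
    hence "s - 1 \<notin> S" unfolding S_def by simp
    thus "y \<in> {1..<Tr} - S" using s s2 by auto
  qed
  moreover have "inj_on (\<lambda>s. s - 1) (S - {1})" using Ssub by (auto simp: inj_on_def)
  ultimately have A: "card (S - {1}) \<le> card ({1..<Tr} - S)"
  proof -
    assume a: "(\<lambda>s. s - 1) ` (S - {1}) \<subseteq> {1..<Tr} - S" "inj_on (\<lambda>s. s - 1) (S - {1})"
    have "card (S - {1}) = card ((\<lambda>s. s - 1) ` (S - {1}))" using a(2) by (simp add: card_image)
    also have "\<dots> \<le> card ({1..<Tr} - S)" using a(1) by (intro card_mono) auto
    finally show ?thesis .
  qed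
  have fS: "finite S" using Ssub finite_subset by blast
  have B: "card ({1..<Tr} - S) = (Tr - 1) - card S" using Ssub
    by (simp add: card_Diff_subset fS)
  have C: "card S \<le> card (S - {1}) + 1"
    by (cases "1 \<in> S") (simp_all add: card_Diff_singleton fS)
  have D: "card S \<le> Tr - 1" using card_mono[OF _ Ssub] by simp
  show ?thesis using A B C D cS T(1) by linarith
qed

lemma LB:
  assumes dist: "distinct xs" and setx: "set xs = V"
    and wx: "\<forall>i<nn. w0 (xs!i) = int i - int nn"
    and T0: "1 \<le> T0" "T0 \<le> nn"
    and adj: "\<forall>i. i + 1 < T0 \<longrightarrow> p (xs!i) \<noteq> p (xs!(i+1))"
    and tail: "\<forall>i. T0 \<le> i \<and> i < nn \<longrightarrow> p (xs!i) = p (xs!(T0-1))"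
  shows "RC_time V E w0 = 2*nn - T0"
proof -
  have len: "length xs = nn" using dist setx distinct_card by fastforce
  have sim: "pos t = xs!(t-1) \<and> dirty t = set (drop t xs)" if "1 \<le> t" "t \<le> T0" for t
    using that
  proof (induction t rule: nat_induct_at_least)
    case base
    have "xs!0 \<in> V" using len nn_pos setx nth_mem[of 0 xs] by simp
    moreover have "w0 (xs!0) = - int nn" using wx nn_pos by auto
    moreover have "inj_on w0 V" using w0_bij by (simp add: bij_betw_def)
    ultimately have "pos (Suc 0) = xs!0" using pos1_V by (metis inj_onD)
    moreover have "dirty (Suc 0) = set (drop 1 xs)"
    proof -
      have "xs = xs!0 # drop 1 xs" using len nn_pos
        by (metis Cons_nth_drop_Suc One_nat_def drop0 less_le_trans zero_less_one)
      hence h: "V = insert (xs!0) (set (drop 1 xs))" "xs!0 \<notin> set (drop 1 xs)"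
        using setx dist by (metis list.simps(15), metis distinct.simps(2))
      have d1: "dirty (Suc 0) = V - {xs!0}" using calculation by (simp add: dirty_Suc dirty0)
      have "V - {xs!0} = set (drop 1 xs)" using h by blast
      thus ?thesis using d1 by simp
    qed
    ultimately show ?case by simp
  next
    case (Suc t)
    hence IH: "pos t = xs!(t-1)" "dirty t = set (drop t xs)" and tl: "t < T0" by auto
    have tn: "t < nn" using tl T0 by simp
    have dr: "drop t xs = xs!t # drop (Suc t) xs" using tn len by (simp add: Cons_nth_drop_Suc)
    have xt: "xs!t \<in> dirty t" using IH dr by simp
    have "p (xs!(t-1)) \<noteq> p (xs!(t-1+1))" using adj[rule_format, of "t-1"] tl Suc.hyps by simp
    hence pd: "p (xs!t) \<noteq> p (pos t)" using IH Suc.hyps by simp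
    have "W t (pos (Suc t)) \<le> W t (xs!t)"
      using step(3)[OF Suc.hyps] xt pd dirty_sub by blast
    also have "W t (xs!t) = int t - int nn"
    proof -
      have "W t (xs!t) < 0" using xt by (simp add: dirty_def)
      hence "W t (xs!t) = w0 (xs!t)" using W_inv[of t] by blast
      thus ?thesis using wx tn by simp
    qed
    finally have le: "W t (pos (Suc t)) \<le> int t - int nn" .
    hence "pos (Suc t) \<in> dirty t" using step(1)[OF Suc.hyps] tn by (auto simp: dirty_def)
    then obtain j where j: "j < length (drop t xs)" "pos (Suc t) = drop t xs ! j"
      using IH by (metis in_set_conv_nth)
    have jj: "pos (Suc t) = xs!(t+j)" "t + j < nn" using j len by auto
    have "W t (pos (Suc t)) = w0 (pos (Suc t))"
    proof -
      have "W t (pos (Suc t)) < 0" using \<open>pos (Suc t) \<in> dirty t\<close> by (simp add: dirty_def)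
      thus ?thesis using W_inv[of t] by blast
    qed
    hence "int (t+j) - int nn \<le> int t - int nn" using le jj wx by simp
    hence "j = 0" by simp
    hence ps: "pos (Suc t) = xs!t" using jj by simp
    have nd: "xs!t \<notin> set (drop (Suc t) xs)"
      using distinct_drop[OF dist, of t] unfolding dr by simp
    have "dirty (Suc t) = dirty t - {xs!t}" using ps by (simp add: dirty_Suc)
    also have "\<dots> = set (drop t xs) - {xs!t}" using IH(2) by simp
    also have "\<dots> = set (drop (Suc t) xs)" unfolding dr using nd by auto
    finally have "dirty (Suc t) = set (drop (Suc t) xs)" .
    thus ?case using ps by simp
  qed
  have nt: "\<not> trapped t" if "1 \<le> t" "t < T0" for t
  proof -
    have S: "pos t = xs!(t-1)" "dirty t = set (drop t xs)" using sim that by auto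
    have "drop t xs = xs!t # drop (Suc t) xs" using that T0 len by (simp add: Cons_nth_drop_Suc)
    hence "xs!t \<in> dirty t" using S by simp
    moreover have "p (xs!(t-1)) \<noteq> p (xs!(t-1+1))" using adj[rule_format, of "t-1"] that by simp
    moreover have "t - 1 + 1 = t" using that by simp
    ultimately show ?thesis unfolding trapped_def using S by metis
  qed
  have tr: "trapped T0"
  proof -
    have S: "pos T0 = xs!(T0-1)" "dirty T0 = set (drop T0 xs)" using sim T0 by auto
    show ?thesis unfolding trapped_def S
    proof
      fix x assume "x \<in> set (drop T0 xs)"
      then obtain j where "j < length (drop T0 xs)" "x = drop T0 xs ! j" by (metis in_set_conv_nth)
      thus "p x = p (xs!(T0-1))" using tail len by auto
    qed
  qed
  have "Tr = T0" unfolding Tr_def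
  proof (rule Least_equality)
    show "1 \<le> T0 \<and> trapped T0" using T0 tr by simp
    show "\<And>y. 1 \<le> y \<and> trapped y \<Longrightarrow> T0 \<le> y" using nt by (meson not_le)
  qed
  thus ?thesis using RC_eq dd_eq T0 by simp
qed

end

definition blk :: "(nat \<Rightarrow> nat) \<Rightarrow> nat \<Rightarrow> (nat \<times> nat) list" where
  "blk s i = map (\<lambda>j. (i, j)) [0..<s i]"

lemma set_blk: "set (blk s i) = {i} \<times> {..<s i}" by (auto simp: blk_def)
lemma len_blk: "length (blk s i) = s i" by (simp add: blk_def)
lemma nth_blk: "j < s i \<Longrightarrow> blk s i ! j = (i, j)" by (simp add: blk_def)

lemma sorted_concat_blk: "sorted xs \<Longrightarrow> sorted (map fst (concat (map (blk s) xs)))"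
proof (induction xs)
  case Nil then show ?case by simp
next
  case (Cons a xs)
  have "sorted (map fst (blk s a))" by (simp add: blk_def sorted_iff_nth_mono)
  moreover have "\<forall>x\<in>set (blk s a). \<forall>y\<in>set (concat (map (blk s) xs)). fst x \<le> fst y"
    using Cons.prems by (auto simp: set_blk)
  ultimately show ?case using Cons by (auto simp: sorted_append)
qed

lemma set_concat_blk: "set (concat (map (blk s) xs)) = (\<Union>i\<in>set xs. {i} \<times> {..<s i})"
  by (auto simp: set_blk)

lemma len_concat_blk: "distinct xs \<Longrightarrow> length (concat (map (blk s) xs)) = (\<Sum>i\<in>set xs. s i)"
  by (simp add: length_concat len_blk sum_list_distinct_conv_sum_set comp_def)

lemma kpart_V_Sigma: "kpart_V k s = Sigma {1..k} (\<lambda>i. {..<s i})"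
  by (auto simp: kpart_V_def)

locale kp =
  fixes k :: nat and s :: "nat \<Rightarrow> nat"
  assumes k3: "k \<ge> 3" and spos: "\<And>i. 1 \<le> i \<Longrightarrow> i \<le> k \<Longrightarrow> s i \<ge> 1"
    and smono: "\<And>i. 1 \<le> i \<Longrightarrow> i < k \<Longrightarrow> s (Suc i) \<le> s i"
begin

abbreviation "VV \<equiv> kpart_V k s"
abbreviation "EE \<equiv> kpart_E k s"
definition "N = (\<Sum>i=1..k. s i)"
definition "Pre = concat (map (blk s) [2..<Suc k])"
definition "LL = Pre @ blk s 1"
definition "m = length Pre"
definition "r = (\<Sum>i=3..k. s i)"

lemma s_anti: assumes "1 \<le> i" "i \<le> j" "j \<le> k" shows "s j \<le> s i"
  using assms(2,3)
proof (induction j rule: dec_induct)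
  case base then show ?case by simp
next
  case (step j) then show ?case using smono[of j] assms(1) by simp
qed

lemma finVV: "finite VV" by (simp add: kpart_V_Sigma)

lemma card_VV: "card VV = N"
  unfolding kpart_V_Sigma N_def by (simp add: card_SigmaI)

lemma part_eq: "1 \<le> i \<Longrightarrow> i \<le> k \<Longrightarrow> {x\<in>VV. fst x = i} = {i} \<times> {..<s i}"
  by (auto simp: kpart_V_def)

lemma card_part: "1 \<le> i \<Longrightarrow> i \<le> k \<Longrightarrow> card {x\<in>VV. fst x = i} = s i"
  using part_eq by (simp add: card_cartesian_product)

lemma fst_VV: "x \<in> VV \<Longrightarrow> 1 \<le> fst x \<and> fst x \<le> k"
  by (auto simp: kpart_V_def)

lemma cs_inst: "w \<in> init_weightings VV \<Longrightarrow> cs VV EE fst w"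
proof unfold_locales
  show "finite VV" by (rule finVV)
  show "\<And>x y. EE x y = (x \<in> VV \<and> y \<in> VV \<and> fst x \<noteq> fst y)" by (simp add: kpart_E_def)
  show "\<And>v. v \<in> VV \<Longrightarrow> \<exists>x\<in>VV. fst x \<noteq> fst v"
  proof -
    fix v assume "v \<in> VV"
    show "\<exists>x\<in>VV. fst x \<noteq> fst v"
    proof (cases "fst v = 1")
      case True
      have "(2, 0) \<in> VV" using spos[of 2] k3 by (auto simp: kpart_V_def)
      then show ?thesis using True by force
    next
      case False
      have "(1, 0) \<in> VV" using spos[of 1] k3 by (auto simp: kpart_V_def)
      then show ?thesis using False by force
    qed
  qed
  have "(1, 0) \<in> VV" using spos[of 1] k3 by (auto simp: kpart_V_def)
  thus "VV \<noteq> {}" by blast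
qed

lemma UB:
  assumes w: "w \<in> init_weightings VV"
  shows "RC_time VV EE w + 1 \<le> N + s 1 \<and> RC_time VV EE w + 2 * s 2 \<le> 2 * N"
proof -
  interpret c: cs VV EE fst w by (rule cs_inst[OF w])
  have RC: "RC_time VV EE w = N + c.dd" using c.RC_eq card_VV by simp
  have T: "1 \<le> c.Tr" "c.Tr \<le> N" using c.Tr_props card_VV by auto
  define P where "P = fst (c.pos c.Tr)"
  have PV: "1 \<le> P \<and> P \<le> k" unfolding P_def using c.posV[OF T(1)] fst_VV by blast
  have "c.dd + 1 \<le> s P" using c.UB1 card_part PV unfolding P_def by simp
  moreover have "s P \<le> s 1" using s_anti PV by simp
  moreover have "2 * s 2 \<le> c.Tr"
  proof (cases "P = 2")
    case True
    have "2 * card {x\<in>VV. fst x = 1} \<le> c.Tr" using c.UB2[of 1] True unfolding P_def by simp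
    thus ?thesis using card_part[of 1] k3 s_anti[of 1 2] by simp
  next
    case False
    have "2 * card {x\<in>VV. fst x = 2} \<le> c.Tr" using c.UB2[of 2] False unfolding P_def by simp
    thus ?thesis using card_part[of 2] k3 by simp
  qed
  moreover have "c.dd = N - c.Tr" using c.dd_eq card_VV by simp
  ultimately show ?thesis using RC T by linarith
qed

end


definition sig :: "nat \<Rightarrow> nat \<Rightarrow> nat \<Rightarrow> nat" where
  "sig M h t = (if t < M then t div 2 + (t mod 2) * h else t)"

lemma sig_inj: assumes "h = (M+1) div 2" shows "inj_on (sig M h) {..<N}"
proof (rule inj_onI)
  fix a b assume ab: "a \<in> {..<N}" "b \<in> {..<N}" "sig M h a = sig M h b"
  have lt: "t < M \<Longrightarrow> sig M h t < M \<and> (even t \<longleftrightarrow> sig M h t < h)" for t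
    unfolding sig_def using assms by (cases "even t") (auto elim!: evenE oddE)
  show "a = b"
  proof (cases "a < M")
    case True
    show ?thesis
    proof (cases "b < M")
      case True
      with lt[of a] lt[of b] \<open>a < M\<close> ab(3) have "even a = even b" by auto
      thus ?thesis using ab(3) \<open>a < M\<close> True unfolding sig_def
        by (cases "even a") (auto elim!: evenE oddE)
    next
      case False thus ?thesis using lt[of a] \<open>a < M\<close> ab(3) by (auto simp: sig_def)
    qed
  next
    case False
    thus ?thesis using lt[of b] ab(3) by (cases "b < M") (auto simp: sig_def)
  qed
qed

lemma sig_bij: assumes "h = (M+1) div 2" "M \<le> N" shows "bij_betw (sig M h) {..<N} {..<N}"
proof -
  have lt: "t < M \<Longrightarrow> sig M h t < M" for t
    unfolding sig_def using assms(1) by (cases "even t") (auto elim!: evenE oddE)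
  have "sig M h ` {..<N} \<subseteq> {..<N}" using lt assms(2) by (auto simp: sig_def) (meson lessThan_iff order_less_le_trans lt)
  thus ?thesis using sig_inj[OF assms(1)] by (simp add: bij_betw_def endo_inj_surj)
qed

lemma bij_shift: "bij_betw (\<lambda>i. int i - int N) {..<N} {- int N .. -1}"
proof -
  have "inj_on (\<lambda>i. int i - int N) {..<N}" by (auto simp: inj_on_def)
  moreover have "(\<lambda>i. int i - int N) ` {..<N} = {- int N .. -1}"
  proof
    show "(\<lambda>i. int i - int N) ` {..<N} \<subseteq> {- int N..-1}" by auto
    show "{- int N..-1} \<subseteq> (\<lambda>i. int i - int N) ` {..<N}"
    proof
      fix y assume "y \<in> {- int N..-1}"
      hence "nat (y + int N) < N" "y = int (nat (y + int N)) - int N" by auto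
      thus "y \<in> (\<lambda>i. int i - int N) ` {..<N}" by blast
    qed
  qed
  ultimately show ?thesis by (simp add: bij_betw_def)
qed

context kp
begin

lemma construct:
  assumes dist: "distinct B" and setB: "set B = VV" and T0: "1 \<le> T0" "T0 \<le> N"
    and adj: "\<forall>i. i + 1 < T0 \<longrightarrow> fst (B!i) \<noteq> fst (B!(i+1))"
    and tail: "\<forall>i. T0 \<le> i \<and> i < N \<longrightarrow> fst (B!i) = fst (B!(T0-1))"
  shows "\<exists>w \<in> init_weightings VV. RC_time VV EE w = 2*N - T0"
proof -
  have len: "length B = N" using dist setB card_VV distinct_card by fastforce
  have bn: "bij_betw (nth B) {..<N} VV" using bij_betw_nth[OF dist] len setB by simp
  define iv where "iv = inv_into {..<N} (nth B)"
  have bi: "bij_betw iv VV {..<N}" unfolding iv_def by (rule bij_betw_inv_into[OF bn])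
  define w where "w x = (if x \<in> VV then int (iv x) - int N else 0)" for x
  have "bij_betw ((\<lambda>i. int i - int N) \<circ> iv) VV {- int N .. -1}"
    by (rule bij_betw_trans[OF bi bij_shift])
  hence "bij_betw w VV {- int N .. -1}"
    by (rule bij_betw_cong[THEN iffD1, rotated]) (simp add: w_def)
  hence wi: "w \<in> init_weightings VV" unfolding init_weightings_def card_VV by (simp add: w_def)
  interpret c: cs VV EE fst w by (rule cs_inst[OF wi])
  have wx: "\<forall>i<N. w (B!i) = int i - int N"
  proof (intro allI impI)
    fix i assume i: "i < N"
    have "B!i \<in> set B" using i len by simp
    hence "B!i \<in> VV" using setB by simp
    moreover have "iv (B!i) = i" unfolding iv_def
      using inv_into_f_f[OF bij_betw_imp_inj_on[OF bn], of i] i by simp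
    ultimately show "w (B!i) = int i - int N" by (simp add: w_def)
  qed
  have "RC_time VV EE w = 2 * N - T0"
    using c.LB[OF dist setB _ _ _ adj] wx T0 tail card_VV by simp
  thus ?thesis using wi by blast
qed

lemma upt2: "[2..<Suc k] = 2 # [3..<Suc k]" using k3 by (simp add: upt_conv_Cons)

lemma Pre_split: "Pre = blk s 2 @ concat (map (blk s) [3..<Suc k])"
  unfolding Pre_def upt2 by simp

lemma m_eq: "m = s 2 + r"
proof -
  have "length (concat (map (blk s) [3..<Suc k])) = r"
    unfolding r_def by (subst len_concat_blk) (auto intro: sum.cong)
  thus ?thesis unfolding m_def Pre_split by (simp add: len_blk)
qed

lemma N_eq: "N = s 1 + m"
proof -
  have "m = (\<Sum>i=2..k. s i)" unfolding m_def Pre_def by (subst len_concat_blk) (auto intro: sum.cong)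
  moreover have "N = s 1 + (\<Sum>i=2..k. s i)" unfolding N_def using k3
    by (simp add: sum.atLeast_Suc_atMost numeral_2_eq_2)
  ultimately show ?thesis by simp
qed

lemma len_LL: "length LL = N" unfolding LL_def using N_eq m_def by (simp add: len_blk)

lemma set_LL: "set LL = VV"
proof -
  have "set LL = (\<Union>i\<in>{2..k}. {i} \<times> {..<s i}) \<union> {1} \<times> {..<s 1}"
    unfolding LL_def Pre_def by (simp add: set_concat_blk set_blk atLeastLessThanSuc_atLeastAtMost del: upt_Suc)
  also have "\<dots> = VV"
  proof -
    have "{1..k} = insert 1 {2..k}" using k3 by auto
    thus ?thesis unfolding kpart_V_Sigma by auto
  qed
  finally show ?thesis .
qed

lemma dist_LL: "distinct LL"
  by (rule card_distinct) (simp add: set_LL card_VV len_LL)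

lemma LL_low: "l < s 2 \<Longrightarrow> LL!l = (2, l)"
  unfolding LL_def Pre_split m_def by (simp add: nth_append len_blk nth_blk)

lemma LL_pre: "l < m \<Longrightarrow> LL!l \<in> set Pre"
  unfolding LL_def m_def by (simp add: nth_append)

lemma LL_mid: "s 2 \<le> l \<Longrightarrow> l < m \<Longrightarrow> 3 \<le> fst (LL!l)"
proof -
  assume a: "s 2 \<le> l" "l < m"
  have "LL!l = Pre ! l" using a unfolding LL_def m_def by (simp add: nth_append)
  also have "\<dots> = concat (map (blk s) [3..<Suc k]) ! (l - s 2)"
    using a unfolding Pre_split by (simp add: nth_append len_blk del: upt_Suc)
  finally have "LL!l = concat (map (blk s) [3..<Suc k]) ! (l - s 2)" .
  moreover have "l - s 2 < length (concat (map (blk s) [3..<Suc k]))"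
    using a unfolding m_def Pre_split by (simp add: len_blk del: upt_Suc)
  ultimately have "LL!l \<in> set (concat (map (blk s) [3..<Suc k]))" by (metis nth_mem)
  thus ?thesis by (auto simp: set_concat_blk set_blk simp del: upt_Suc)
qed

lemma LL_pre2: "l < m \<Longrightarrow> 2 \<le> fst (LL!l)"
  using LL_pre[of l] unfolding Pre_def by (auto simp: set_concat_blk set_blk simp del: upt_Suc)

lemma LL_high: "m \<le> l \<Longrightarrow> l < N \<Longrightarrow> fst (LL!l) = 1"
proof -
  assume a: "m \<le> l" "l < N"
  hence "LL!l = blk s 1 ! (l - m)" unfolding LL_def m_def by (simp add: nth_append)
  thus ?thesis using a N_eq by (simp add: nth_blk)
qed

lemma LL_mono: "a \<le> b \<Longrightarrow> b < m \<Longrightarrow> fst (LL!a) \<le> fst (LL!b)"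
proof -
  assume ab: "a \<le> b" "b < m"
  have "sorted (map fst Pre)" unfolding Pre_def by (rule sorted_concat_blk) (rule sorted_upt)
  hence "map fst Pre ! a \<le> map fst Pre ! b" using sorted_nth_mono[OF _ ab(1), of "map fst Pre"] ab unfolding m_def by simp
  thus ?thesis using ab unfolding LL_def m_def by (simp add: nth_append)
qed

lemma LL_count:
  assumes "I \<subseteq> {..<N}" "\<forall>l\<in>I. fst (LL!l) = q" "1 \<le> q" "q \<le> k"
  shows "card I \<le> s q"
proof -
  have "inj_on (nth LL) I" using inj_on_nth[OF dist_LL] assms(1) len_LL by auto
  hence "card I = card (nth LL ` I)" by (simp add: card_image)
  also have "\<dots> \<le> card {x\<in>VV. fst x = q}"
  proof (rule card_mono)
    show "finite {x\<in>VV. fst x = q}" using finVV by simp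
    show "nth LL ` I \<subseteq> {x\<in>VV. fst x = q}" using assms(1,2) set_LL len_LL nth_mem by fastforce
  qed
  finally show ?thesis using card_part assms(3,4) by simp
qed

end


context kp
begin

lemma LL_VV: "l < N \<Longrightarrow> LL!l \<in> VV"
  using set_LL len_LL nth_mem by metis

lemma LL_k: "l < N \<Longrightarrow> fst (LL!l) \<le> k"
  using LL_VV fst_VV by blast

lemma m_lt_N: "m < N" using N_eq spos[of 1] k3 by simp

lemma ne2: "s 2 \<le> l \<Longrightarrow> l < N \<Longrightarrow> fst (LL!l) \<noteq> 2"
  using LL_mid LL_high by (cases "l < m") fastforce+

lemma B_props:
  assumes "M \<le> N" "h = (M+1) div 2"
  defines "B \<equiv> map (\<lambda>t. LL ! sig M h t) [0..<N]"
  shows "distinct B" "set B = VV" "\<And>t. t < N \<Longrightarrow> B!t = LL!(sig M h t)"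
proof -
  have bs: "bij_betw (sig M h) {..<N} {..<N}" by (rule sig_bij[OF assms(2,1)])
  have inj: "inj_on (\<lambda>t. LL ! sig M h t) {..<N}"
  proof (rule inj_onI)
    fix a b assume ab: "a \<in> {..<N}" "b \<in> {..<N}" "LL ! sig M h a = LL ! sig M h b"
    have "sig M h a < N" "sig M h b < N" using bs ab by (auto simp: bij_betw_def)
    hence "sig M h a = sig M h b" using ab(3) dist_LL len_LL nth_eq_iff_index_eq by metis
    thus "a = b" using bs ab by (auto simp: bij_betw_def inj_on_def)
  qed
  show "distinct B" unfolding B_def using inj by (simp add: distinct_map lessThan_atLeast0)
  have "set B = nth LL ` (sig M h ` {..<N})" unfolding B_def by (auto simp: lessThan_atLeast0)
  also have "\<dots> = nth LL ` {..<N}" using bs by (simp add: bij_betw_def)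
  also have "\<dots> = set LL" by (auto simp: set_conv_nth len_LL)
  finally show "set B = VV" using set_LL by simp
  show "\<And>t. t < N \<Longrightarrow> B!t = LL!(sig M h t)" unfolding B_def by simp
qed

lemma case_ii:
  assumes "r < s 2"
  shows "\<exists>w \<in> init_weightings VV. RC_time VV EE w = 2*N - 2 * s 2"
proof -
  define M where "M = 2 * s 2"
  define h where "h = (M+1) div 2"
  have h: "h = s 2" unfolding h_def M_def by simp
  have s2: "1 \<le> s 2" using spos[of 2] k3 by simp
  have s12: "s 2 \<le> s 1" using s_anti[of 1 2] k3 by simp
  have MN: "M \<le> N" unfolding M_def using N_eq m_eq s12 by simp
  define B where "B = map (\<lambda>t. LL ! sig M h t) [0..<N]"
  note BP = B_props[OF MN h_def, folded B_def]
  have mN: "m = s 2 + r" by (rule m_eq)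
  show ?thesis unfolding M_def[symmetric]
  proof (rule construct[OF BP(1,2)])
    show "1 \<le> M" "M \<le> N" using s2 MN unfolding M_def by auto
    show "\<forall>i. i + 1 < M \<longrightarrow> fst (B!i) \<noteq> fst (B!(i+1))"
    proof (intro allI impI)
      fix i assume i: "i + 1 < M"
      hence iN: "i + 1 < N" using MN by simp
      show "fst (B!i) \<noteq> fst (B!(i+1))"
      proof (cases "even i")
        case True
        then obtain a where a: "i = 2*a" by blast
        have "sig M h i = a" "sig M h (i+1) = a + s 2" using a i h unfolding sig_def by auto
        moreover have "a < s 2" using a i unfolding M_def by simp
        moreover have "a + s 2 < N" using a i MN unfolding M_def by simp
        ultimately show ?thesis using BP(3)[of i] BP(3)[of "i+1"] iN LL_low ne2[of "a + s 2"] by auto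
      next
        case False
        then obtain a where a: "i = 2*a + 1" using oddE by blast
        have "sig M h i = a + s 2" "sig M h (i+1) = a + 1" using a i h unfolding sig_def by auto
        moreover have "a + 1 < s 2" using a i unfolding M_def by simp
        moreover have "a + s 2 < N" using a i MN unfolding M_def by simp
        ultimately show ?thesis using BP(3)[of i] BP(3)[of "i+1"] iN LL_low ne2[of "a + s 2"] by auto
      qed
    qed
    have last: "fst (B!(M-1)) = 1"
    proof -
      have "M - 1 = 2 * (s 2 - 1) + 1" unfolding M_def using s2 by simp
      hence "sig M h (M-1) = (s 2 - 1) + s 2" using h s2 unfolding sig_def M_def by simp
      moreover have "m \<le> (s 2 - 1) + s 2" using mN assms by simp
      moreover have "(s 2 - 1) + s 2 < N" using MN s2 unfolding M_def by simp
      ultimately show ?thesis using BP(3)[of "M-1"] LL_high MN s2 unfolding M_def by simp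
    qed
    show "\<forall>i. M \<le> i \<and> i < N \<longrightarrow> fst (B!i) = fst (B!(M-1))"
    proof (intro allI impI)
      fix i assume i: "M \<le> i \<and> i < N"
      hence "B!i = LL!i" using BP(3) unfolding sig_def by simp
      moreover have "m \<le> i" using i mN assms unfolding M_def by simp
      ultimately show "fst (B!i) = fst (B!(M-1))" using last LL_high i by simp
    qed
  qed
qed

lemma claimA:
  assumes "2 * s 2 \<le> m" "h = (m+1) div 2" "a + h < m"
  shows "fst (LL!a) \<noteq> fst (LL!(a+h))"
proof
  assume eq: "fst (LL!a) = fst (LL!(a+h))"
  define q where "q = fst (LL!a)"
  have all: "\<forall>l\<in>{a..a+h}. fst (LL!l) = q"
  proof
    fix l assume "l \<in> {a..a+h}"
    hence "fst (LL!a) \<le> fst (LL!l)" "fst (LL!l) \<le> fst (LL!(a+h))"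
      using LL_mono assms(3) by auto
    thus "fst (LL!l) = q" using eq q_def by simp
  qed
  have q: "2 \<le> q" "q \<le> k" unfolding q_def using LL_pre2 LL_k assms(3) m_lt_N by auto
  have "card {a..a+h} \<le> s q"
    by (rule LL_count[OF _ all]) (use assms(3) m_lt_N q in auto)
  moreover have "s q \<le> s 2" using s_anti q by simp
  ultimately show False using assms(1,2) by simp
qed

lemma claimB:
  assumes "2 * s 2 \<le> m" "h = (m+1) div 2" "1 \<le> b" "b < h" "b + h - 1 < m"
  shows "fst (LL!b) \<noteq> fst (LL!(b+h-1))"
proof
  assume eq: "fst (LL!b) = fst (LL!(b+h-1))"
  define q where "q = fst (LL!b)"
  have all: "\<forall>l\<in>{b..b+h-1}. fst (LL!l) = q"
  proof
    fix l assume "l \<in> {b..b+h-1}"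
    hence "fst (LL!b) \<le> fst (LL!l)" "fst (LL!l) \<le> fst (LL!(b+h-1))"
      using LL_mono assms(5) by auto
    thus "fst (LL!l) = q" using eq q_def by simp
  qed
  have q: "2 \<le> q" "q \<le> k" unfolding q_def using LL_pre2 LL_k assms m_lt_N by auto
  show False
  proof (cases "s 2 < h")
    case True
    have "card {b..b+h-1} \<le> s q"
      by (rule LL_count[OF _ all]) (use assms(5) m_lt_N q in auto)
    moreover have "s q \<le> s 2" using s_anti q by simp
    ultimately show False using True assms(3) by simp
  next
    case False
    hence "LL!b = (2, b)" using LL_low assms(4) by simp
    hence q2: "q = 2" unfolding q_def by simp
    have all2: "\<forall>l\<in>{0..b+h-1}. fst (LL!l) = 2"
    proof
      fix l assume l: "l \<in> {0..b+h-1}"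
      hence "fst (LL!l) \<le> fst (LL!(b+h-1))" "2 \<le> fst (LL!l)"
        using LL_mono LL_pre2 assms(5) by auto
      thus "fst (LL!l) = 2" using eq q_def q2 by simp
    qed
    have "card {0..b+h-1} \<le> s 2"
      by (rule LL_count[OF _ all2]) (use assms(5) m_lt_N k3 in auto)
    thus False using assms(1-4) by simp
  qed
qed

lemma case_i:
  assumes "2 * s 2 \<le> m"
  shows "\<exists>w \<in> init_weightings VV. RC_time VV EE w = 2*N - (m + 1)"
proof -
  define h where "h = (m+1) div 2"
  have MN: "m \<le> N" using m_lt_N by simp
  define B where "B = map (\<lambda>t. LL ! sig m h t) [0..<N]"
  note BP = B_props[OF MN h_def, folded B_def]
  have Bm: "B!m = LL!m" using BP(3)[of m] m_lt_N unfolding sig_def by simp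
  have Bm1: "fst (B!m) = 1" using Bm LL_high m_lt_N by simp
  show ?thesis
  proof (rule construct[OF BP(1,2)])
    show "1 \<le> m + 1" "m + 1 \<le> N" using m_lt_N by auto
    show "\<forall>i. i + 1 < m + 1 \<longrightarrow> fst (B!i) \<noteq> fst (B!(i+1))"
    proof (intro allI impI)
      fix i assume i: "i + 1 < m + 1"
      show "fst (B!i) \<noteq> fst (B!(i+1))"
      proof (cases "i + 1 = m")
        case True
        have "sig m h i < m" using i h_def unfolding sig_def by (cases "even i") (auto elim!: evenE oddE)
        hence "2 \<le> fst (B!i)" using BP(3)[of i] LL_pre2 i m_lt_N by simp
        thus ?thesis using True Bm1 by simp
      next
        case False
        hence i2: "i + 1 < m" using i by simp
        show ?thesis
        proof (cases "even i")
          case True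
          then obtain a where a: "i = 2*a" by blast
          have "sig m h i = a" "sig m h (i+1) = a + h" using a i2 unfolding sig_def by auto
          moreover have "a + h < m" using a i2 h_def by simp
          ultimately show ?thesis using BP(3)[of i] BP(3)[of "i+1"] i2 m_lt_N claimA[OF assms h_def] by simp
        next
          case False
          then obtain a where a: "i = 2*a + 1" using oddE by blast
          have "sig m h i = a + h" "sig m h (i+1) = a + 1" using a i2 unfolding sig_def by auto
          moreover have "a + 1 < h" "(a+1) + h - 1 < m" using a i2 h_def by simp_all
          moreover have "(a+1) + h - 1 = a + h" by simp
          ultimately show ?thesis using BP(3)[of i] BP(3)[of "i+1"] i2 m_lt_N
              claimB[OF assms h_def, of "a+1"] by auto
        qed
      qed
    qed
    show "\<forall>i. m + 1 \<le> i \<and> i < N \<longrightarrow> fst (B!i) = fst (B!(m + 1 - 1))"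
    proof (intro allI impI)
      fix i assume i: "m + 1 \<le> i \<and> i < N"
      hence "B!i = LL!i" using BP(3) unfolding sig_def by simp
      thus "fst (B!i) = fst (B!(m + 1 - 1))" using Bm1 LL_high i by simp
    qed
  qed
qed

end


context kp
begin

lemma fin_img: "finite (RC_time VV EE ` init_weightings VV)"
proof (rule finite_subset)
  show "RC_time VV EE ` init_weightings VV \<subseteq> {..2*N}" using UB by fastforce
qed simp

lemma RC_max_final:
  "(2 * s 2 \<le> m \<longrightarrow> RC_max VV EE = N + s 1 - 1) \<and> (\<not> 2 * s 2 \<le> m \<longrightarrow> RC_max VV EE = 2*N - 2 * s 2)"
proof (intro conjI impI)
  assume a: "2 * s 2 \<le> m"
  obtain w where w: "w \<in> init_weightings VV" "RC_time VV EE w = 2*N - (m + 1)" using case_i[OF a] by blast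
  show "RC_max VV EE = N + s 1 - 1" unfolding RC_max_def
  proof (rule Max_eqI[OF fin_img])
    show "\<And>y. y \<in> RC_time VV EE ` init_weightings VV \<Longrightarrow> y \<le> N + s 1 - 1" using UB by fastforce
    have eq: "2*N - (m + 1) = N + s 1 - 1" using N_eq by simp
    show "N + s 1 - 1 \<in> RC_time VV EE ` init_weightings VV"
      unfolding eq[symmetric] w(2)[symmetric] by (rule imageI[OF w(1)])
  qed
next
  assume a: "\<not> 2 * s 2 \<le> m"
  hence "r < s 2" using m_eq by simp
  then obtain w where w: "w \<in> init_weightings VV" "RC_time VV EE w = 2*N - 2 * s 2" using case_ii by blast
  show "RC_max VV EE = 2*N - 2 * s 2" unfolding RC_max_def
  proof (rule Max_eqI[OF fin_img])
    show "\<And>y. y \<in> RC_time VV EE ` init_weightings VV \<Longrightarrow> y \<le> 2*N - 2 * s 2" using UB by fastforce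
    show "2*N - 2 * s 2 \<in> RC_time VV EE ` init_weightings VV"
      unfolding w(2)[symmetric] by (rule imageI[OF w(1)])
  qed
qed

end


theorem theorem2:
  fixes k n :: nat and c :: "nat \<Rightarrow> real"
  assumes "k \<ge> 3"
    and "\<forall>i. 1 \<le> i \<and> i < k \<longrightarrow> c (i + 1) \<le> c i"
    and "c k > 0"
    and "(\<Sum>i=1..k. c i) = 1"
    and "n > 0"
    and "\<forall>i\<in>{1..k}. \<exists>m::nat. c i * real n = real m"
  shows "(c 2 \<le> (1 - c 1) / 2 \<longrightarrow>
           real (RC_max (kpart_V k (\<lambda>i. nat \<lfloor>c i * real n\<rfloor>)) (kpart_E k (\<lambda>i. nat \<lfloor>c i * real n\<rfloor>)))
             = real n + c 1 * real n - 1)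
       \<and> (c 2 > (1 - c 1) / 2 \<longrightarrow>
           real (RC_max (kpart_V k (\<lambda>i. nat \<lfloor>c i * real n\<rfloor>)) (kpart_E k (\<lambda>i. nat \<lfloor>c i * real n\<rfloor>)))
             = 2 * (real n - c 2 * real n))"
proof -
  define s where "s = (\<lambda>i. nat \<lfloor>c i * real n\<rfloor>)"
  have cmono: "c j \<le> c i" if "1 \<le> i" "i \<le> j" "j \<le> k" for i j
    using that(2,3)
  proof (induction j rule: dec_induct)
    case base then show ?case by simp
  next
    case (step j)
    have "c (j + 1) \<le> c j" using assms(2)[rule_format, of j] step.hyps step.prems that(1) by simp
    then show ?case using step by simp
  qed
  have cpos: "c i > 0" if "1 \<le> i" "i \<le> k" for i
    using cmono[OF that order_refl] assms(3) by simp
  have sreal: "real (s i) = c i * real n" if "1 \<le> i" "i \<le> k" for i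
  proof -
    have iin: "i \<in> {1..k}" using that by simp
    obtain mi :: nat where "c i * real n = real mi" using assms(6) iin by blast
    thus ?thesis unfolding s_def by simp
  qed
  interpret kp k s
  proof
    show "3 \<le> k" by (rule assms(1))
    show "\<And>i. 1 \<le> i \<Longrightarrow> i \<le> k \<Longrightarrow> 1 \<le> s i"
    proof -
      fix i assume i: "1 \<le> i" "i \<le> k"
      have "real (s i) > 0" using sreal[OF i] cpos[OF i] assms(5) by simp
      thus "1 \<le> s i" by simp
    qed
    show "\<And>i. 1 \<le> i \<Longrightarrow> i < k \<Longrightarrow> s (Suc i) \<le> s i"
    proof -
      fix i assume i: "1 \<le> i" "i < k"
      have "real (s (Suc i)) \<le> real (s i)"
        using sreal[of i] sreal[of "Suc i"] i assms(2) assms(5) by (simp add: mult_right_mono)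
      thus "s (Suc i) \<le> s i" by simp
    qed
  qed
  have Nn: "real N = real n"
  proof -
    have "real N = (\<Sum>i=1..k. real (s i))" unfolding N_def by simp
    also have "\<dots> = (\<Sum>i=1..k. c i * real n)" by (rule sum.cong) (auto simp: sreal)
    also have "\<dots> = real n" using assms(4) by (simp add: sum_distrib_right[symmetric])
    finally show ?thesis .
  qed
  have s1: "real (s 1) = c 1 * real n" and s2: "real (s 2) = c 2 * real n"
    using sreal assms(1) by auto
  have mreal: "real m = real n - c 1 * real n" using N_eq Nn s1 by simp
  have npos: "real n > 0" using assms(5) by simp
  have cond: "c 2 \<le> (1 - c 1) / 2 \<longleftrightarrow> 2 * s 2 \<le> m"
  proof -
    have "c 2 \<le> (1 - c 1) / 2 \<longleftrightarrow> 2 * (c 2 * real n) \<le> real n - c 1 * real n"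
    proof -
      have e1: "c 2 \<le> (1 - c 1) / 2 \<longleftrightarrow> (2 * c 2) * real n \<le> (1 - c 1) * real n"
        using mult_le_cancel_right_pos[OF npos, of "2 * c 2" "1 - c 1"] by (simp add: mult.commute)
      have e2: "(2 * c 2) * real n \<le> (1 - c 1) * real n \<longleftrightarrow> 2 * (c 2 * real n) \<le> real n - c 1 * real n"
        by (simp add: algebra_simps)
      show ?thesis using e1 e2 by simp
    qed
    also have "\<dots> \<longleftrightarrow> real (2 * s 2) \<le> real m" using s2 mreal by simp
    finally show ?thesis by linarith
  qed
  note F = RC_max_final
  have le: "s 2 \<le> N" using N_eq m_eq by simp
  show ?thesis unfolding s_def[symmetric]
  proof (intro conjI impI)
    assume a: "c 2 \<le> (1 - c 1) / 2"
    hence "RC_max VV EE = N + s 1 - 1" using F cond by simp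
    moreover have "N + s 1 \<ge> 1" using spos[of 1] assms(1) by simp
    ultimately show "real (RC_max VV EE) = real n + c 1 * real n - 1" using Nn s1 by (simp add: of_nat_diff)
  next
    assume a: "(1 - c 1) / 2 < c 2"
    hence "RC_max VV EE = 2*N - 2 * s 2" using F cond by simp
    thus "real (RC_max VV EE) = 2 * (real n - c 2 * real n)" using Nn s2 le by (simp add: of_nat_diff)
  qed
qed

end
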